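(* Let $s$ and $t$ be fixed positive integers. Then for sufficiently large $n$, $$R(\mathcal{SD}_{s,t},Q_n)\le n+\frac{(2+o(1))\,n}{\log n},$$ where $o(1)$ denotes a quantity tending to $0$ as $n\to\infty$ (for fixed $s,t$).
   Context: A poset $P_2$ is an (induced) subposet of $P_1$ if $P_2\subseteq P_1$ and for all $X,Y\in P_2$, $X\le_{P_2}Y$ iff $X\le_{P_1}Y$; a copy of a poset $P$ in $P_1$ is an induced subposet isomorphic to $P$. The Boolean lattice $Q_n$ is the poset of all subsets of an $n$-element set ordered by inclusion. A blue/red coloring of a poset is a map from its elements to $\{\text{blue},\text{red}\}$. For posets $P_1,P_2$, the poset Ramsey number $R(P_1,P_2)$ is the smallest integer $N$ such that every blue/red coloring of $Q_N$ contains a copy of $P_1$ all of whose elements are blue or a copy of $P_2$ all of whose elements are red. A chain $C_t$ is a totally ordered poset on $t$ elements. The $(s,t)$-subdivided diamond $\mathcal{SD}_{s,t}$ is the poset obtained from two disjoint chains of lengths $s$ and $t$, whose elements are pairwise incomparable across the two chains, by adding one element smaller than all others and one element larger than all others. $\log$ is base $2$. *)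

theory Defs
  imports Complex_Main
begin

definition has_copy :: "'a set \<Rightarrow> ('a \<Rightarrow> 'a \<Rightarrow> bool) \<Rightarrow> 'b set \<Rightarrow> ('b \<Rightarrow> 'b \<Rightarrow> bool) \<Rightarrow> bool" where
  "has_copy A leA B leB \<longleftrightarrow>
     (\<exists>f. f ` A \<subseteq> B \<and> inj_on f A \<and> (\<forall>x\<in>A. \<forall>y\<in>A. leA x y \<longleftrightarrow> leB (f x) (f y)))"

definition Q :: "nat \<Rightarrow> nat set set" where
  "Q n = Pow {..<n}"

text \<open>A blue/red colouring of Q_N is a predicate c (c X = True means X is blue).
  ramsey_arrow says every colouring of Q_N has a blue copy of P1 or a red copy of P2.\<close>

definition ramsey_arrow :: "nat \<Rightarrow> 'a set \<Rightarrow> ('a \<Rightarrow> 'a \<Rightarrow> bool) \<Rightarrow> 'b set \<Rightarrow> ('b \<Rightarrow> 'b \<Rightarrow> bool) \<Rightarrow> bool" where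
  "ramsey_arrow N P1 le1 P2 le2 \<longleftrightarrow>
     (\<forall>c :: nat set \<Rightarrow> bool.
        has_copy P1 le1 {X \<in> Q N. c X} (\<subseteq>) \<or> has_copy P2 le2 {X \<in> Q N. \<not> c X} (\<subseteq>))"

definition poset_ramsey :: "'a set \<Rightarrow> ('a \<Rightarrow> 'a \<Rightarrow> bool) \<Rightarrow> 'b set \<Rightarrow> ('b \<Rightarrow> 'b \<Rightarrow> bool) \<Rightarrow> nat" where
  "poset_ramsey P1 le1 P2 le2 = (LEAST N. ramsey_arrow N P1 le1 P2 le2)"

text \<open>The (s,t)-subdivided diamond. Elements: (0,0) is the bottom, (3,0) the top,
  (1,i) for i<s form the first chain, (2,j) for j<t the second chain.\<close>

definition SD :: "nat \<Rightarrow> nat \<Rightarrow> (nat \<times> nat) set" where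
  "SD s t = {(0,0), (3,0)} \<union> {(1,i) | i. i < s} \<union> {(2,j) | j. j < t}"

definition SD_le :: "nat \<times> nat \<Rightarrow> nat \<times> nat \<Rightarrow> bool" where
  "SD_le x y \<longleftrightarrow> x = y \<or> x = (0,0) \<or> y = (3,0)
      \<or> (fst x = fst y \<and> fst x \<in> {1,2} \<and> snd x \<le> snd y)"

end

theory Submission
  imports Defs "HOL-Combinatorics.Permutations" "HOL-Real_Asymp.Real_Asymp"
begin


definition bchain :: "(nat set \<Rightarrow> bool) \<Rightarrow> nat set \<Rightarrow> nat set \<Rightarrow> (nat \<Rightarrow> nat) \<Rightarrow> nat \<Rightarrow> nat set \<Rightarrow> (nat \<Rightarrow> nat set) \<Rightarrow> bool" where
 "bchain c X Y \<pi> j A Z \<longleftrightarrow> (\<forall>i<j. c (Z i) \<and> Z i \<subseteq> X \<union> Y \<and> Z i \<inter> Y = \<pi> ` {..<i} \<and> Z i \<inter> X \<subseteq> A)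
    \<and> (\<forall>i i'. i \<le> i' \<longrightarrow> i' < j \<longrightarrow> Z i \<subseteq> Z i')"

lemma bchain_mono: assumes "bchain c X Y \<pi> j A Z" "A \<subseteq> B" shows "bchain c X Y \<pi> j B Z"
proof -
  have "Z i \<inter> X \<subseteq> B" if "i < j" for i
  proof -
    have "Z i \<inter> X \<subseteq> A" using assms(1) that unfolding bchain_def by simp
    then show ?thesis using assms(2) by (rule subset_trans)
  qed
  then show ?thesis using assms unfolding bchain_def by simp
qed

lemma bchain_ext:
  assumes b: "bchain c X Y \<pi> g A Z" and XY: "X \<inter> Y = {}" and AX: "A \<subseteq> X"
    and P: "\<pi> ` {..<g} \<subseteq> Y" and col: "c (A \<union> \<pi> ` {..<g})"
  shows "bchain c X Y \<pi> (Suc g) A (Z(g := A \<union> \<pi> ` {..<g}))"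
proof -
  have sub: "Z i \<subseteq> A \<union> \<pi> ` {..<g}" if "i < g" for i
  proof
    fix x assume x: "x \<in> Z i"
    have "Z i \<subseteq> X \<union> Y" "Z i \<inter> Y = \<pi> ` {..<i}" "Z i \<inter> X \<subseteq> A" using b that unfolding bchain_def by auto
    moreover have "\<pi> ` {..<i} \<subseteq> \<pi> ` {..<g}" using that by auto
    ultimately show "x \<in> A \<union> \<pi> ` {..<g}" using x by blast
  qed
  have e: "(A \<union> \<pi> ` {..<g}) \<inter> Y = \<pi> ` {..<g}" "(A \<union> \<pi> ` {..<g}) \<inter> X \<subseteq> A"
    using XY AX P by blast+
  define Z' where "Z' = Z(g := A \<union> \<pi> ` {..<g})"
  have p1: "c (Z' i) \<and> Z' i \<subseteq> X \<union> Y \<and> Z' i \<inter> Y = \<pi> ` {..<i} \<and> Z' i \<inter> X \<subseteq> A"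
    if "i < Suc g" for i
  proof (cases "i = g")
    case True
    then show ?thesis using e col AX P unfolding Z'_def by auto
  next
    case False
    then have "i < g" using that by auto
    then show ?thesis using b False unfolding bchain_def Z'_def by auto
  qed
  have p2: "Z' i \<subseteq> Z' i'" if "i \<le> i'" "i' < Suc g" for i i'
  proof (cases "i' = g")
    case True
    then show ?thesis using sub that unfolding Z'_def by (cases "i = g") auto
  next
    case False
    then have "i' < g" using that by auto
    then show ?thesis using b False that unfolding bchain_def Z'_def by auto
  qed
  show ?thesis using p1 p2 unfolding bchain_def Z'_def[symmetric] by blast
qed

lemma chain_lemma:
  assumes XY: "X \<inter> Y = {}" and P: "\<pi> ` {..<k} \<subseteq> Y"
    and no: "\<not> (\<exists>Z. bchain c X Y \<pi> (Suc k) X Z)"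
  shows "\<exists>f. (\<forall>A. A \<subseteq> X \<longrightarrow> \<not> c (A \<union> f A) \<and> f A \<subseteq> Y) \<and> (\<forall>A B. A \<subseteq> B \<longrightarrow> B \<subseteq> X \<longrightarrow> f A \<subseteq> f B)"
proof -
  define g where "g A = (GREATEST j. j \<le> k \<and> (\<exists>Z. bchain c X Y \<pi> j A Z))" for A
  have ex0: "0 \<le> k \<and> (\<exists>Z. bchain c X Y \<pi> 0 A Z)" for A unfolding bchain_def by auto
  have gI: "g A \<le> k \<and> (\<exists>Z. bchain c X Y \<pi> (g A) A Z)" for A
    unfolding g_def by (rule GreatestI_nat[where P="\<lambda>j. j \<le> k \<and> (\<exists>Z. bchain c X Y \<pi> j A Z)", OF ex0[of A]]) auto
  have gle: "j \<le> g A" if "j \<le> k" "bchain c X Y \<pi> j A Z" for j A Z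
    unfolding g_def by (rule Greatest_le_nat[where b=k]) (use that in auto)
  have red: "\<not> c (A \<union> \<pi> ` {..<g A})" if AX: "A \<subseteq> X" for A
  proof
    assume col: "c (A \<union> \<pi> ` {..<g A})"
    obtain Z where Z: "bchain c X Y \<pi> (g A) A Z" using gI by blast
    have b: "bchain c X Y \<pi> (Suc (g A)) A (Z(g A := A \<union> \<pi> ` {..<g A}))"
      by (rule bchain_ext[OF Z XY AX _ col]) (use gI[of A] P in auto)
    show False
    proof (cases "g A < k")
      case True then show False using gle[OF _ b] by auto
    next
      case False then have "g A = k" using gI[of A] by auto
      moreover have "bchain c X Y \<pi> (Suc (g A)) X (Z(g A := A \<union> \<pi> ` {..<g A}))"
        by (rule bchain_mono[OF b AX])
      ultimately show False using no by auto
    qed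
  qed
  have sub: "\<pi> ` {..<g A} \<subseteq> Y" for A using gI[of A] P by auto
  have mono: "\<pi> ` {..<g A} \<subseteq> \<pi> ` {..<g B}" if "A \<subseteq> B" for A B
  proof -
    obtain Z where Z: "bchain c X Y \<pi> (g A) A Z" using gI by blast
    have "g A \<le> g B" by (rule gle[OF _ bchain_mono[OF Z that]]) (use gI[of A] in auto)
    then show ?thesis by auto
  qed
  show ?thesis
  proof (rule exI[of _ "\<lambda>A. \<pi> ` {..<g A}"], rule conjI)
    show "\<forall>A. A \<subseteq> X \<longrightarrow> \<not> c (A \<union> \<pi> ` {..<g A}) \<and> \<pi> ` {..<g A} \<subseteq> Y" using red sub by simp
    show "\<forall>A B. A \<subseteq> B \<longrightarrow> B \<subseteq> X \<longrightarrow> \<pi> ` {..<g A} \<subseteq> \<pi> ` {..<g B}" using mono by simp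
  qed
qed

lemma red_copy:
  assumes f: "\<forall>A. A \<subseteq> {..<n} \<longrightarrow> \<not> c (A \<union> f A) \<and> f A \<subseteq> {n..<N}"
    and mono: "\<forall>A B. A \<subseteq> B \<longrightarrow> B \<subseteq> {..<n} \<longrightarrow> f A \<subseteq> f B"
    and nN: "n \<le> N"
  shows "has_copy (Q n) (\<subseteq>) {X \<in> Q N. \<not> c X} (\<subseteq>)"
  unfolding has_copy_def
proof (intro exI[of _ "\<lambda>A. A \<union> f A"] conjI ballI)
  have key: "A \<subseteq> B" if "A \<in> Q n" "B \<in> Q n" "A \<union> f A \<subseteq> B \<union> f B" for A B
  proof -
    have "f B \<subseteq> {n..<N}" using f that(2) unfolding Q_def by auto
    then have "f B \<inter> {..<n} = {}" by auto
    then show ?thesis using that unfolding Q_def by auto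
  qed
  show "(\<lambda>A. A \<union> f A) ` Q n \<subseteq> {X \<in> Q N. \<not> c X}"
  proof
    fix Z assume "Z \<in> (\<lambda>A. A \<union> f A) ` Q n"
    then obtain A where A: "A \<subseteq> {..<n}" "Z = A \<union> f A" unfolding Q_def by blast
    then have fA: "\<not> c (A \<union> f A)" "f A \<subseteq> {n..<N}" using f by auto
    have "A \<subseteq> {..<N}" using A(1) nN by auto
    then show "Z \<in> {X \<in> Q N. \<not> c X}" using fA A(2) unfolding Q_def by auto
  qed
  show "inj_on (\<lambda>A. A \<union> f A) (Q n)"
    by (rule inj_onI) (metis key order_refl subset_antisym)
  fix A B assume "A \<in> Q n" "B \<in> Q n"
  then show "(A \<subseteq> B) = (A \<union> f A \<subseteq> B \<union> f B)"
    using key mono unfolding Q_def by blast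
qed

definition Phi :: "nat \<Rightarrow> nat \<Rightarrow> (nat \<Rightarrow> nat \<Rightarrow> nat) \<Rightarrow> nat \<Rightarrow> nat" where
  "Phi n d g i = n + d * g (i mod d) (i div d) + i mod d"

lemma Phi_mod:
  assumes "d \<ge> 1" "Phi n d g i = Phi n d g' i'"
  shows "i mod d = i' mod d"
proof -
  have "(d * g (i mod d) (i div d) + i mod d) mod d = (d * g' (i' mod d) (i' div d) + i' mod d) mod d"
    using assms(2) unfolding Phi_def by simp
  then show ?thesis by simp
qed

lemma Phi_props:
  assumes d: "d \<ge> 1" and g: "\<forall>r<d. g r permutes {..<m}"
  shows "inj_on (Phi n d g) {..<d*m}" "Phi n d g ` {..<d*m} = {n..<n+d*m}"
proof -
  show inj: "inj_on (Phi n d g) {..<d*m}"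
  proof (rule inj_onI)
    fix i i' assume i: "i \<in> {..<d*m}" "i' \<in> {..<d*m}" and e: "Phi n d g i = Phi n d g i'"
    have r: "i mod d = i' mod d" using Phi_mod[OF d e] .
    have "d * g (i mod d) (i div d) = d * g (i mod d) (i' div d)" using e r unfolding Phi_def by simp
    then have "g (i mod d) (i div d) = g (i mod d) (i' div d)" using d by simp
    moreover have "inj (g (i mod d))" using g d permutes_inj by (metis mod_less_divisor less_le_trans zero_less_one)
    ultimately have "i div d = i' div d" by (simp add: inj_eq)
    then show "i = i'" using r by (metis div_mod_decomp)
  qed
  have sub: "Phi n d g ` {..<d*m} \<subseteq> {n..<n+d*m}"
  proof
    fix x assume "x \<in> Phi n d g ` {..<d*m}"
    then obtain i where i: "i < d*m" "x = Phi n d g i" by auto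
    have rd: "i mod d < d" using d by simp
    have "i div d < m" using i(1) less_mult_imp_div_less[of i m d] by (simp add: mult.commute)
    then have "g (i mod d) (i div d) < m" using g rd permutes_in_image by (metis lessThan_iff)
    then have "g (i mod d) (i div d) + 1 \<le> m" by simp
    then have "d * (g (i mod d) (i div d) + 1) \<le> d * m" by (rule mult_le_mono2)
    then have "d * g (i mod d) (i div d) + i mod d < d * m" using rd by (simp add: algebra_simps)
    then show "x \<in> {n..<n+d*m}" using i(2) unfolding Phi_def by simp
  qed
  have "card (Phi n d g ` {..<d*m}) = card {n..<n+d*m}" using card_image[OF inj] by simp
  then show "Phi n d g ` {..<d*m} = {n..<n+d*m}" using sub card_subset_eq by (metis finite_atLeastLessThan)
qed

lemma Phi_diff:
  assumes d: "d \<ge> 1" and g: "g \<in> PiE {..<d} (\<lambda>_. {p. p permutes {..<m}})"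
    and g': "g' \<in> PiE {..<d} (\<lambda>_. {p. p permutes {..<m}})" and ne: "g \<noteq> g'"
  shows "\<exists>i<d*m. Phi n d g i \<noteq> Phi n d g' i"
proof -
  obtain r where r: "r < d" "g r \<noteq> g' r" using g g' ne by (metis PiE_ext lessThan_iff)
  then obtain q where q: "g r q \<noteq> g' r q" by auto
  have pr: "g r permutes {..<m}" "g' r permutes {..<m}" using g g' r(1) by auto
  have "q < m"
  proof (rule ccontr)
    assume "\<not> q < m"
    then have "g r q = q" "g' r q = q" using pr permutes_not_in by (metis lessThan_iff)+
    then show False using q by simp
  qed
  define i where "i = d * q + r"
  have im: "i mod d = r" "i div d = q" unfolding i_def using r(1) by auto
  have "i < d * m"
  proof -
    have "d * q + r < d * q + d" using r(1) by simp
    also have "\<dots> = d * (q + 1)" by simp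
    also have "\<dots> \<le> d * m" using \<open>q < m\<close> by (intro mult_le_mono2) simp
    finally show ?thesis unfolding i_def .
  qed
  moreover have "Phi n d g i \<noteq> Phi n d g' i" unfolding Phi_def im using q d by simp
  ultimately show ?thesis by blast
qed

lemma chain_facts:
  assumes b: "bchain c X Y \<pi> (Suc k) A Z" and inj: "inj_on \<pi> {..<k}" and P: "\<pi> ` {..<k} \<subseteq> Y"
  shows "\<And>i i'. i \<le> i' \<Longrightarrow> i' \<le> k \<Longrightarrow> Z i \<subseteq> Z i'"
    and "\<And>i. i \<le> k \<Longrightarrow> c (Z i) \<and> Z i \<subseteq> X \<union> Y"
    and "\<And>i i'. i' < i \<Longrightarrow> i \<le> k \<Longrightarrow> \<pi> i' \<in> Z i"
    and "\<And>i i'. i \<le> i' \<Longrightarrow> i' < k \<Longrightarrow> \<pi> i' \<notin> Z i"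
proof -
  have Yp: "Z i \<inter> Y = \<pi> ` {..<i}" if "i \<le> k" for i using b that unfolding bchain_def by auto
  show "Z i \<subseteq> Z i'" if "i \<le> i'" "i' \<le> k" for i i' using b that unfolding bchain_def by auto
  show "c (Z i) \<and> Z i \<subseteq> X \<union> Y" if "i \<le> k" for i using b that unfolding bchain_def by auto
  show "\<pi> i' \<in> Z i" if "i' < i" "i \<le> k" for i i'
  proof -
    have "\<pi> i' \<in> \<pi> ` {..<i}" using that by auto
    then show ?thesis using Yp[OF that(2)] by blast
  qed
  show "\<pi> i' \<notin> Z i" if "i \<le> i'" "i' < k" for i i'
  proof
    assume a: "\<pi> i' \<in> Z i"
    have "\<pi> i' \<in> Y" using P that by auto
    then have "\<pi> i' \<in> \<pi> ` {..<i}" using a Yp[of i] that by auto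
    then obtain j where j: "j < i" "\<pi> i' = \<pi> j" by auto
    then have "i' = j" using inj that by (metis inj_on_eq_iff lessThan_iff order_less_trans order_less_le_trans)
    then show False using j that by simp
  qed
qed

lemma SD_cases:
  assumes "x \<in> SD s t"
  obtains "x = (0,0)" | "x = (3,0)" | i where "x = (1,i)" "i < s" | j where "x = (2,j)" "j < t"
  using assms unfolding SD_def by auto

lemma SD_antisym:
  assumes "x \<in> SD s t" "y \<in> SD s t" "SD_le x y" "SD_le y x" shows "x = y"
  using assms(1)
proof (cases rule: SD_cases)
  case 1 then show ?thesis using assms(2-4) by (cases rule: SD_cases[OF assms(2)]) (auto simp: SD_le_def)
next
  case 2 then show ?thesis using assms(2-4) by (cases rule: SD_cases[OF assms(2)]) (auto simp: SD_le_def)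
next
  case 3 then show ?thesis using assms(2-4) by (cases rule: SD_cases[OF assms(2)]) (auto simp: SD_le_def)
next
  case 4 then show ?thesis using assms(2-4) by (cases rule: SD_cases[OF assms(2)]) (auto simp: SD_le_def)
qed

lemma notsub: "a \<in> A \<Longrightarrow> a \<notin> B \<Longrightarrow> \<not> A \<subseteq> B" by blast

lemma SD_construct:
  assumes d: "d \<ge> 1" "s \<le> d" "t \<le> d"
    and Pi: "\<pi> ` {..<k} = Y" and Si: "\<sigma> ` {..<k} = Y"
    and ip: "inj_on \<pi> {..<k}" and isg: "inj_on \<sigma> {..<k}"
    and cross: "\<forall>i<k. \<forall>i'<k. \<pi> i = \<sigma> i' \<longrightarrow> i mod d = i' mod d"
    and pk: "p < k" and pne: "\<pi> p \<noteq> \<sigma> p" and pre: "\<forall>i<p. \<pi> i = \<sigma> i"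
    and bp: "bchain c X Y \<pi> (Suc k) X Zp" and bs: "bchain c X Y \<sigma> (Suc k) X Zs"
    and e0: "Zp 0 = Zs 0" and ek: "Zp k = Zs k"
  shows "has_copy (SD s t) SD_le {Z \<in> Pow (X \<union> Y). c Z} (\<subseteq>)"
proof -
  note fp = chain_facts[OF bp ip equalityD1[OF Pi]]
  note fs = chain_facts[OF bs isg equalityD1[OF Si]]
  have far: "i \<ge> p + d" if "i > p" "i mod d = p mod d" for i
  proof -
    have "d dvd i - p" using that mod_eq_dvd_iff_nat[of p i d] by simp
    then have "d \<le> i - p" using that by (simp add: dvd_imp_le)
    then show ?thesis using that(1) by linarith
  qed
  obtain r where r: "r < k" "\<pi> r = \<sigma> p" using Pi Si pk by (metis imageE imageI lessThan_iff)
  have rp: "r \<ge> p + d"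
  proof -
    have "r \<noteq> p" using r pne by auto
    moreover have "\<not> r < p"
    proof
      assume "r < p"
      then have "\<sigma> r = \<sigma> p" using pre r by auto
      then show False using isg \<open>r < p\<close> pk by (metis inj_on_eq_iff lessThan_iff order_less_trans order_less_irrefl)
    qed
    ultimately have "r > p" by simp
    moreover have "r mod d = p mod d" using cross r pk by blast
    ultimately show ?thesis using far by blast
  qed
  obtain q where q: "q < k" "\<sigma> q = \<pi> p" using Pi Si pk by (metis imageE imageI lessThan_iff)
  have qp: "q \<ge> p + d"
  proof -
    have "q \<noteq> p" using q pne by auto
    moreover have "\<not> q < p"
    proof
      assume "q < p"
      then have "\<pi> q = \<pi> p" using pre q by auto
      then show False using ip \<open>q < p\<close> pk by (metis inj_on_eq_iff lessThan_iff order_less_trans order_less_irrefl)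
    qed
    ultimately have "q > p" by simp
    moreover have "p mod d = q mod d" using cross q pk by (metis)
    ultimately show ?thesis using far by metis
  qed
  define F where "F x = (if x = (0,0) then Zp 0 else if x = (3,0) then Zp k
      else if fst x = 1 then Zp (p + 1 + snd x) else Zs (p + 1 + snd x))" for x :: "nat \<times> nat"
  have F0: "F (0,0) = Zp 0" and F3: "F (3,0) = Zp k" and F1: "F (1,i) = Zp (p+1+i)"
    and F2: "F (2,i) = Zs (p+1+i)" for i unfolding F_def by auto
  have i1: "p + 1 + i < k" if "i < s" for i using that d rp r by linarith
  have i2: "p + 1 + j < k" if "j < t" for j using that d qp q by linarith
  have img: "F x \<in> {Z \<in> Pow (X \<union> Y). c Z}" if "x \<in> SD s t" for x
    using that
  proof (cases rule: SD_cases)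
    case 1 then show ?thesis using fp(2)[of 0] F0 by auto
  next
    case 2 then show ?thesis using fp(2)[of k] F3 by auto
  next
    case (3 i) then show ?thesis using fp(2)[of "p+1+i"] F1 i1[of i] by auto
  next
    case (4 j) then show ?thesis using fs(2)[of "p+1+j"] F2 i2[of j] by auto
  qed
  have ord: "SD_le x y \<longleftrightarrow> F x \<subseteq> F y" if x: "x \<in> SD s t" and y: "y \<in> SD s t" for x y
    using x
  proof (cases rule: SD_cases)
    case 1
    show ?thesis using y
    proof (cases rule: SD_cases)
      case 2 then show ?thesis using \<open>x = (0,0)\<close> F0 F3 fp(1)[of 0 k] by (simp add: SD_le_def)
    next
      case (3 i) then show ?thesis using \<open>x = (0,0)\<close> F0 F1 fp(1)[of 0 "p+1+i"] i1[of i] by (simp add: SD_le_def)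
    next
      case (4 j) then show ?thesis using \<open>x = (0,0)\<close> F0 F2 fs(1)[of 0 "p+1+j"] i2[of j] e0 by (simp add: SD_le_def)
    qed (use \<open>x = (0,0)\<close> in \<open>simp add: SD_le_def\<close>)
  next
    case 2
    show ?thesis using y
    proof (cases rule: SD_cases)
      case 1
      have "\<not> Zp k \<subseteq> Zp 0" by (rule notsub[OF fp(3)[of 0 k] fp(4)[of 0 0]]) (use pk in auto)
      then show ?thesis using \<open>x = (3,0)\<close> 1 F0 F3 by (simp add: SD_le_def)
    next
      case (3 i)
      have "\<not> Zp k \<subseteq> Zp (p+1+i)" by (rule notsub[OF fp(3)[of "p+1+i" k] fp(4)[of "p+1+i" "p+1+i"]]) (use i1[of i] 3 in auto)
      then show ?thesis using \<open>x = (3,0)\<close> 3 F1 F3 by (simp add: SD_le_def)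
    next
      case (4 j)
      have "\<not> Zs k \<subseteq> Zs (p+1+j)" by (rule notsub[OF fs(3)[of "p+1+j" k] fs(4)[of "p+1+j" "p+1+j"]]) (use i2[of j] 4 in auto)
      then show ?thesis using \<open>x = (3,0)\<close> 4 F2 F3 ek by (simp add: SD_le_def)
    qed (use \<open>x = (3,0)\<close> in \<open>simp add: SD_le_def\<close>)
  next
    case (3 i)
    show ?thesis using y
    proof (cases rule: SD_cases)
      case 1
      have "\<not> Zp (p+1+i) \<subseteq> Zp 0" by (rule notsub[OF fp(3)[of 0 "p+1+i"] fp(4)[of 0 0]]) (use i1[of i] 3 pk in auto)
      then show ?thesis using 3 1 F0 F1 by (simp add: SD_le_def)
    next
      case 2 then show ?thesis using 3 F1 F3 fp(1)[of "p+1+i" k] i1[of i] by (simp add: SD_le_def)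
    next
      case (3 i')
      show ?thesis
      proof (cases "i \<le> i'")
        case True then show ?thesis using 3 \<open>x = (1,i)\<close> F1 fp(1)[of "p+1+i" "p+1+i'"] i1[of i'] by (simp add: SD_le_def)
      next
        case False
        have "\<not> Zp (p+1+i) \<subseteq> Zp (p+1+i')" by (rule notsub[OF fp(3)[of "p+1+i'" "p+1+i"] fp(4)[of "p+1+i'" "p+1+i'"]]) (use i1[of i] \<open>x = (1,i)\<close> \<open>i < s\<close> False in auto)
        then show ?thesis using 3 \<open>x = (1,i)\<close> F1 False by (simp add: SD_le_def)
      qed
    next
      case (4 j)
      have "\<not> Zp (p+1+i) \<subseteq> Zs (p+1+j)"
      proof (rule notsub[OF fp(3)[of p "p+1+i"]])
        show "p < p+1+i" by simp
        show "p + 1 + i \<le> k" using i1[of i] 3 by simp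
        show "\<pi> p \<notin> Zs (p + 1 + j)" using fs(4)[of "p+1+j" q] q qp 4 d by simp
      qed
      then show ?thesis using 3 4 F1 F2 by (simp add: SD_le_def)
    qed
  next
    case (4 j)
    show ?thesis using y
    proof (cases rule: SD_cases)
      case 1
      have "\<not> Zs (p+1+j) \<subseteq> Zs 0" by (rule notsub[OF fs(3)[of 0 "p+1+j"] fs(4)[of 0 0]]) (use i2[of j] 4 pk in auto)
      then show ?thesis using 4 1 F0 F2 e0 by (simp add: SD_le_def)
    next
      case 2 then show ?thesis using 4 F2 F3 fs(1)[of "p+1+j" k] i2[of j] ek by (simp add: SD_le_def)
    next
      case (4 j')
      show ?thesis
      proof (cases "j \<le> j'")
        case True then show ?thesis using 4 \<open>x = (2,j)\<close> F2 fs(1)[of "p+1+j" "p+1+j'"] i2[of j'] by (simp add: SD_le_def)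
      next
        case False
        have "\<not> Zs (p+1+j) \<subseteq> Zs (p+1+j')" by (rule notsub[OF fs(3)[of "p+1+j'" "p+1+j"] fs(4)[of "p+1+j'" "p+1+j'"]]) (use i2[of j] \<open>x = (2,j)\<close> \<open>j < t\<close> False in auto)
        then show ?thesis using 4 \<open>x = (2,j)\<close> F2 False by (simp add: SD_le_def)
      qed
    next
      case (3 i)
      have "\<not> Zs (p+1+j) \<subseteq> Zp (p+1+i)"
      proof (rule notsub[OF fs(3)[of p "p+1+j"]])
        show "p < p+1+j" by simp
        show "p + 1 + j \<le> k" using i2[of j] 4 by simp
        show "\<sigma> p \<notin> Zp (p + 1 + i)" using fp(4)[of "p+1+i" r] r rp 3 d by simp
      qed
      then show ?thesis using 3 4 F1 F2 by (simp add: SD_le_def)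
    qed
  qed
  show ?thesis unfolding has_copy_def
  proof (intro exI[of _ F] conjI)
    show "F ` SD s t \<subseteq> {Z \<in> Pow (X \<union> Y). c Z}" using img by blast
    show "inj_on F (SD s t)"
    proof (rule inj_onI)
      fix x y assume "x \<in> SD s t" "y \<in> SD s t" "F x = F y"
      then show "x = y" using ord SD_antisym by (metis order_refl)
    qed
    show "\<forall>x\<in>SD s t. \<forall>y\<in>SD s t. SD_le x y = (F x \<subseteq> F y)" using ord by blast
  qed
qed

lemma main_comb:
  assumes d: "d \<ge> 1" "s \<le> d" "t \<le> d" and big: "(4::nat)^n < fact m ^ d"
  shows "ramsey_arrow (n + d*m) (SD s t) SD_le (Q n) (\<subseteq>)"
  unfolding ramsey_arrow_def
proof (intro allI disjCI)
  fix c :: "nat set \<Rightarrow> bool"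
  assume nored: "\<not> has_copy (Q n) (\<subseteq>) {X \<in> Q (n + d * m). \<not> c X} (\<subseteq>)"
  define k where "k = d * m"
  define X where "X = {..<n}"
  define Y where "Y = {n..<n+k}"
  have XY: "X \<inter> Y = {}" unfolding X_def Y_def by auto
  have XYN: "X \<union> Y = {..<n + d*m}" unfolding X_def Y_def k_def by auto
  define G where "G = PiE {..<d} (\<lambda>_. {p. p permutes {..<m}})"
  have gperm: "\<forall>r<d. g r permutes {..<m}" if "g \<in> G" for g using that unfolding G_def by auto
  have props: "inj_on (Phi n d g) {..<k}" "Phi n d g ` {..<k} = Y" if "g \<in> G" for g
    using Phi_props[OF d(1) gperm[OF that]] unfolding k_def Y_def by auto
  have ex: "\<exists>Z. bchain c X Y (Phi n d g) (Suc k) X Z" if g: "g \<in> G" for g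
  proof (rule ccontr)
    assume nz: "\<not> (\<exists>Z. bchain c X Y (Phi n d g) (Suc k) X Z)"
    have PY: "Phi n d g ` {..<k} \<subseteq> Y" using props(2)[OF g] by simp
    have "\<exists>f. (\<forall>A. A \<subseteq> X \<longrightarrow> \<not> c (A \<union> f A) \<and> f A \<subseteq> Y) \<and> (\<forall>A B. A \<subseteq> B \<longrightarrow> B \<subseteq> X \<longrightarrow> f A \<subseteq> f B)"
      by (rule chain_lemma[OF XY PY nz])
    then obtain f where f: "\<forall>A. A \<subseteq> X \<longrightarrow> \<not> c (A \<union> f A) \<and> f A \<subseteq> Y"
      and mono: "\<forall>A B. A \<subseteq> B \<longrightarrow> B \<subseteq> X \<longrightarrow> f A \<subseteq> f B" by (elim exE conjE)
    have "has_copy (Q n) (\<subseteq>) {X \<in> Q (n + k). \<not> c X} (\<subseteq>)"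
      by (rule red_copy[of n c f]) (use f mono in \<open>auto simp: X_def Y_def\<close>)
    then show False using nored unfolding k_def by simp
  qed
  define Zf where "Zf g = (SOME Z. bchain c X Y (Phi n d g) (Suc k) X Z)" for g
  have Zf: "bchain c X Y (Phi n d g) (Suc k) X (Zf g)" if "g \<in> G" for g
    unfolding Zf_def using someI_ex[OF ex[OF that]] .
  define h where "h g = (Zf g 0, Zf g k \<inter> X)" for g
  have hG: "h ` G \<subseteq> Pow X \<times> Pow X"
  proof
    fix z assume "z \<in> h ` G"
    then obtain g where g: "g \<in> G" "z = h g" by auto
    have "Zf g 0 \<subseteq> X \<union> Y" "Zf g 0 \<inter> Y = {}" using Zf[OF g(1)] unfolding bchain_def by auto
    then show "z \<in> Pow X \<times> Pow X" unfolding g(2) h_def by auto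
  qed
  have cardG: "card G = fact m ^ d"
    unfolding G_def by (simp add: card_PiE card_permutations)
  have cardP: "card (Pow X \<times> Pow X) = 4^n"
    unfolding X_def by (simp add: card_cartesian_product card_Pow power_mult_distrib[symmetric])
  have "\<not> inj_on h G"
  proof
    assume "inj_on h G"
    from card_inj_on_le[OF this hG] have "card G \<le> card (Pow X \<times> Pow X)" unfolding X_def by simp
    then show False using cardG cardP big by simp
  qed
  then obtain g1 g2 where g: "g1 \<in> G" "g2 \<in> G" "g1 \<noteq> g2" "h g1 = h g2" unfolding inj_on_def by blast
  define \<pi> where "\<pi> = Phi n d g1"
  define \<sigma> where "\<sigma> = Phi n d g2"
  obtain i0 where i0: "i0 < k" "\<pi> i0 \<noteq> \<sigma> i0"
    using Phi_diff[OF d(1) g(1)[unfolded G_def] g(2)[unfolded G_def] g(3)] unfolding \<pi>_def \<sigma>_def k_def by blast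
  define p where "p = (LEAST i. \<pi> i \<noteq> \<sigma> i)"
  have pne: "\<pi> p \<noteq> \<sigma> p" unfolding p_def by (rule LeastI[of _ i0]) (rule i0(2))
  have pk: "p < k" using Least_le[of "\<lambda>i. \<pi> i \<noteq> \<sigma> i" i0] i0 unfolding p_def by simp
  have pre: "\<forall>i<p. \<pi> i = \<sigma> i" unfolding p_def using not_less_Least by blast
  have cross: "\<forall>i<k. \<forall>i'<k. \<pi> i = \<sigma> i' \<longrightarrow> i mod d = i' mod d"
    unfolding \<pi>_def \<sigma>_def using Phi_mod[OF d(1)] by blast
  have bp: "bchain c X Y \<pi> (Suc k) X (Zf g1)" unfolding \<pi>_def by (rule Zf[OF g(1)])
  have bs: "bchain c X Y \<sigma> (Suc k) X (Zf g2)" unfolding \<sigma>_def by (rule Zf[OF g(2)])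
  have e0: "Zf g1 0 = Zf g2 0" and ekX: "Zf g1 k \<inter> X = Zf g2 k \<inter> X" using g(4) unfolding h_def by auto
  have "Zf g1 k \<inter> Y = Y" "Zf g1 k \<subseteq> X \<union> Y" using bp props(2)[OF g(1)] unfolding bchain_def \<pi>_def by auto
  moreover have "Zf g2 k \<inter> Y = Y" "Zf g2 k \<subseteq> X \<union> Y" using bs props(2)[OF g(2)] unfolding bchain_def \<sigma>_def by auto
  ultimately have ek: "Zf g1 k = Zf g2 k" using ekX by blast
  have "has_copy (SD s t) SD_le {Z \<in> Pow (X \<union> Y). c Z} (\<subseteq>)"
    by (rule SD_construct[OF d _ _ _ _ cross pk pne pre bp bs e0 ek])
       (use props[OF g(1)] props[OF g(2)] in \<open>auto simp: \<pi>_def \<sigma>_def\<close>)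
  then show "has_copy (SD s t) SD_le {X \<in> Q (n + d * m). c X} (\<subseteq>)"
    unfolding XYN Q_def .
qed



lemma fact_ln: "real M * ln (real M) - real M \<le> ln (fact M)"
proof (cases "M = 0")
  case True then show ?thesis by simp
next
  case False
  have s: "(\<lambda>k. real M ^ k /\<^sub>R fact k) sums exp (real M)" by (rule exp_converges)
  have "sum (\<lambda>k. real M ^ k /\<^sub>R fact k) {M} \<le> suminf (\<lambda>k. real M ^ k /\<^sub>R fact k)"
    by (rule sum_le_suminf) (use s sums_summable in auto)
  then have "real M ^ M / fact M \<le> exp (real M)" using sums_unique[OF s] by (simp add: divide_inverse mult.commute)
  then have le: "real M ^ M \<le> exp (real M) * fact M" by (simp add: divide_le_eq)
  have pos: "0 < real M ^ M" using False by simp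
  have "ln (real M ^ M) \<le> ln (exp (real M) * fact M)"
    using le pos by (subst ln_le_cancel_iff) auto
  also have "\<dots> = real M + ln (fact M)" by (simp add: ln_mult)
  finally show ?thesis by (simp add: ln_realpow)
qed

definition mm :: "nat \<Rightarrow> nat \<Rightarrow> nat" where "mm d n = (LEAST m. (4::nat)^n < fact m ^ d)"

lemma mm_le: "(4::nat)^n < fact M ^ d \<Longrightarrow> mm d n \<le> M"
  unfolding mm_def by (rule Least_le)

lemma mm_I: assumes "d \<ge> 1" shows "(4::nat)^n < fact (mm d n) ^ d"
  unfolding mm_def
proof (rule LeastI)
  have "(4::nat)^n < 4^n + 1" by simp
  also have "\<dots> \<le> fact (4^n+1)" by (rule fact_ge_self)
  also have "\<dots> \<le> fact (4^n+1) ^ d" by (rule self_le_power) (use assms fact_ge_1[of "4^n+1", where 'a=nat] in auto)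
  finally show "(4::nat)^n < fact (4^n+1) ^ d" .
qed

lemma nat_big:
  assumes "real n * ln 4 < real d * ln (fact M)"
  shows "(4::nat)^n < fact M ^ d"
proof -
  have "ln (real (4^n)) < ln (real (fact M ^ d))"
    using assms by (simp add: ln_realpow)
  then have "real (4^n) < real (fact M ^ d)" by (subst (asm) ln_less_cancel_iff) auto
  then show ?thesis by linarith
qed

lemma asym:
  assumes d: "d \<ge> 1" and ep: "\<epsilon> > 0"
  shows "eventually (\<lambda>n. real d * real (mm d n) * log 2 (real n) / real n < 2 + \<epsilon>) sequentially"
proof -
  define K where "K = 2 + \<epsilon>/2"
  define c where "c = K / real d"
  have K: "K > 0" using ep unfolding K_def by simp
  have c: "c > 0" using K d unfolding c_def by simp
  have dc: "real d * c = K" using d unfolding c_def by simp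
  have E1: "eventually (\<lambda>n. real n / log 2 (real n) \<ge> exp 1 / c) sequentially"
  proof -
    have "filterlim (\<lambda>n::nat. real n / log 2 (real n)) at_top sequentially" by real_asymp
    then show ?thesis by (simp add: filterlim_at_top)
  qed
  have E2: "eventually (\<lambda>n. 2 / K < (ln c + ln (real n) - ln (ln (real n) / ln 2) - 1) / ln (real n)) sequentially"
  proof -
    have "((\<lambda>n::nat. (ln c + ln (real n) - ln (ln (real n) / ln 2) - 1) / ln (real n)) \<longlongrightarrow> 1) sequentially"
      by real_asymp
    moreover have "2 / K < 1" using ep unfolding K_def by simp
    ultimately show ?thesis by (rule order_tendstoD(1))
  qed
  have E3: "eventually (\<lambda>n::nat. n \<ge> 3) sequentially" by (rule eventually_ge_at_top)
  have E4: "eventually (\<lambda>n::nat. real d * log 2 (real n) / real n < \<epsilon>/2) sequentially"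
  proof -
    have "((\<lambda>n::nat. real d * log 2 (real n) / real n) \<longlongrightarrow> 0) sequentially" by real_asymp
    moreover have "(0::real) < \<epsilon>/2" using ep by simp
    ultimately show ?thesis by (rule order_tendstoD(2))
  qed
  show ?thesis using E1 E2 E3 E4
  proof eventually_elim
    case (elim n)
    define x where "x = c * (real n / log 2 (real n))"
    define M where "M = nat \<lceil>x\<rceil>"
    have n3: "real n \<ge> 3" using elim(3) by simp
    have lnn: "ln (real n) > 0" using n3 by simp
    have lg: "log 2 (real n) = ln (real n) / ln 2" by (simp add: log_def)
    have lgpos: "log 2 (real n) > 0" using lnn lg by simp
    have xe: "x \<ge> exp 1" unfolding x_def using elim(1) c by (simp add: divide_le_eq mult.commute)
    have xpos: "x > 0" using xe exp_gt_zero[of 1] by linarith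
    have Mx: "real M \<ge> x" unfolding M_def by (rule of_nat_ceiling)
    have Mx1: "real M \<le> x + 1" unfolding M_def using ceiling_correct[of x] xpos by simp
    have lnx: "ln x = ln c + ln (real n) - ln (ln (real n) / ln 2)"
      unfolding x_def lg using c lnn n3 by (simp add: ln_mult ln_div)
    have lnx1: "ln x \<ge> 1" using xe xpos by (metis ln_exp ln_le_cancel_iff exp_gt_zero)
    have lnM: "ln (real M) \<ge> ln x" using Mx xpos by simp
    have A: "2 * ln (real n) < K * (ln x - 1)"
    proof -
      have "2 / K * ln (real n) < ln x - 1" using elim(2) lnn unfolding lnx[symmetric] by (simp add: pos_less_divide_eq)
      then have "2 * ln (real n) / K < ln x - 1" by simp
      then show ?thesis using K by (simp add: divide_less_eq mult.commute)
    qed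
    define B where "B = real n * ln 2 / ln (real n)"
    have Bpos: "B > 0" unfolding B_def using lnn n3 by simp
    have "real n * ln 4 = 2 * ln (real n) * B"
    proof -
      have "ln (4::real) = 2 * ln 2" using ln_realpow[of 2 2] by simp
      then show ?thesis unfolding B_def using lnn by (simp add: field_simps)
    qed
    also have "\<dots> < K * (ln x - 1) * B" using A Bpos by simp
    also have "K * (ln x - 1) * B = real d * (x * (ln x - 1))"
      unfolding x_def B_def lg dc[symmetric] using lnn by (simp add: field_simps)
    also have "\<dots> \<le> real d * (real M * (ln (real M) - 1))"
    proof -
      have "x * (ln x - 1) \<le> real M * (ln (real M) - 1)"
        by (rule mult_mono) (use Mx lnM lnx1 xpos in auto)
      then show ?thesis by (rule mult_left_mono) simp
    qed
    also have "\<dots> \<le> real d * ln (fact M)"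
      using fact_ln[of M] by (intro mult_left_mono) (auto simp: algebra_simps)
    finally have "(4::nat)^n < fact M ^ d" by (rule nat_big)
    then have "mm d n \<le> M" by (rule mm_le)
    then have mmx: "real (mm d n) \<le> x + 1" using Mx1 by linarith
    have "real d * real (mm d n) * log 2 (real n) / real n \<le> real d * (x + 1) * log 2 (real n) / real n"
      using mmx lgpos n3 by (intro divide_right_mono mult_right_mono mult_left_mono) auto
    also have "\<dots> = K + real d * log 2 (real n) / real n"
      unfolding x_def dc[symmetric] using lgpos n3 by (simp add: field_simps less_imp_neq[symmetric])
    also have "\<dots> < 2 + \<epsilon>" using elim(4) unfolding K_def by linarith
    finally show ?case .
  qed
qed



theorem theorem3:
  fixes s t :: nat
  assumes "s \<ge> 1" and "t \<ge> 1"
  shows "\<exists>e :: nat \<Rightarrow> real. e \<longlonglongrightarrow> 0 \<and>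
    (\<forall>\<^sub>F n in sequentially.
       real (poset_ramsey (SD s t) SD_le (Q n) (\<subseteq>))
         \<le> real n + (2 + e n) * real n / log 2 (real n))"
proof -
  define d where "d = max s t"
  have d: "d \<ge> 1" "s \<le> d" "t \<le> d" using assms unfolding d_def by auto
  have R: "poset_ramsey (SD s t) SD_le (Q n) (\<subseteq>) \<le> n + d * mm d n" for n
    unfolding poset_ramsey_def by (rule Least_le, rule main_comb[OF d mm_I[OF d(1)]])
  define e where "e n = max 0 (real d * real (mm d n) * log 2 (real n) / real n - 2)" for n
  show ?thesis
  proof (intro exI[of _ e] conjI)
    show "e \<longlonglongrightarrow> 0"
    proof (rule order_tendstoI)
      fix a :: real assume "a < 0"
      then show "eventually (\<lambda>n. a < e n) sequentially" unfolding e_def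
        by (intro always_eventually allI) (simp add: less_max_iff_disj)
    next
      fix a :: real assume a: "0 < a"
      show "eventually (\<lambda>n. e n < a) sequentially"
        using asym[OF d(1) a] by eventually_elim (use a in \<open>auto simp: e_def\<close>)
    qed
    show "\<forall>\<^sub>F n in sequentially. real (poset_ramsey (SD s t) SD_le (Q n) (\<subseteq>))
         \<le> real n + (2 + e n) * real n / log 2 (real n)"
      using eventually_ge_at_top[of "3::nat"]
    proof eventually_elim
      case (elim n)
      have n3: "real n \<ge> 3" using elim by simp
      have lgpos: "log 2 (real n) > 0" using n3 by simp
      define v where "v = real d * real (mm d n) * log 2 (real n) / real n"
      have v: "v \<le> 2 + e n" unfolding e_def v_def by simp
      have "real (d * mm d n) = v * real n / log 2 (real n)"
        unfolding v_def using lgpos n3 by (simp add: field_simps less_imp_neq[symmetric])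
      also have "\<dots> \<le> (2 + e n) * real n / log 2 (real n)"
        using v lgpos n3 by (intro divide_right_mono mult_right_mono) auto
      finally have "real (d * mm d n) \<le> (2 + e n) * real n / log 2 (real n)" .
      moreover have "real (poset_ramsey (SD s t) SD_le (Q n) (\<subseteq>)) \<le> real n + real (d * mm d n)"
      proof -
        have "real (poset_ramsey (SD s t) SD_le (Q n) (\<subseteq>)) \<le> real (n + d * mm d n)"
          using R[of n] by (simp only: of_nat_le_iff)
        then show ?thesis by (simp only: of_nat_add)
      qed
      ultimately show ?case by linarith
    qed
  qed
qed

end
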